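(* Let $S$ be a collection of non-vertical segments in $\mathbb{R}^3$ in general position, let $G_S$ be the mixed graph associated to $S$ (defined in the context), and let $k\ge 0$ be an integer. Then all depth cycles of $S$ can be eliminated with at most $k$ cuts if and only if $G_S$ admits a feedback vertex set of size at most $k$.
   Context: Segments are closed line segments in $\mathbb{R}^3$, non-vertical meaning not parallel to the $z$-axis. For a segment $s$ let $\bar s$ be its orthogonal projection to the $xy$-plane. General position: segments are pairwise disjoint in $\mathbb{R}^3$; any two projections meet in at most one point; no point of the plane lies on three or more projections. Relation: $s \succ s'$ if some vertical line $\ell$ meets both $s$ and $s'$ and the $z$-coordinate of $\ell\cap s$ exceeds that of $\ell\cap s'$. A depth cycle is a sequence $s_1\succ s_2\succ\dots\succ s_p=s_1$ ($p\ge2$). Cutting a segment $s$ at points $q_1,\dots,q_m\in s$ replaces $s$ by the connected components of $s\setminus\{q_1,\dots,q_m\}$, and $\succ$ is evaluated on the resulting pieces; each cut point counts as one cut. Depth cycles are eliminated if the resulting pieces have no depth cycle. Mixed graphs: a mixed graph $(V,E,A)$ has vertex set $V$, a set $E$ of undirected edges $\{u,v\}$ and a set $A$ of directed arcs $(u,v)$ (tail $u$, head $v$). A cycle is a sequence $v_1,\dots,v_\ell$ with $v_\ell=v_1$, $\ell\ge3$, $v_1,\dots,v_{\ell-1}$ pairwise distinct, such that for each $1\le i\le \ell-1$ either $\{v_i,v_{i+1}\}\in E$ or $(v_i,v_{i+1})\in A$, and no undirected edge is used twice. A feedback vertex set is a set $U\subseteq V$ such that the graph obtained by deleting $U$ has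 no cycle. The graph $G_S=(V,E,A)$: for $s\in S$ let $I(s)$ be the set of points where $\bar s$ meets $\bar t$ for some $t\in S\setminus\{s\}$, listed in order along $\bar s$ as $p^s_1,\dots,p^s_{|I(s)|}$. For each $s$ create vertices $v^s_1,\dots,v^s_{|I(s)|}$ ($v^s_i$ represents $p^s_i$, i.e. the point of $s$ above $p^s_i$), and let $V$ be the union over all $s\in S$. For each $s$ add undirected edges $\{v^s_i,v^s_{i+1}\}$ for $1\le i\le |I(s)|-1$. For each pair $s\succ t$ with $\bar s\cap\bar t\neq\emptyset$, if $p^s_i=p^t_j$ is the common point, add the arc $(v^s_i,v^t_j)$. A vertex set $U$ corresponds to the set of cuts that cuts each segment $s$ at the points of $s$ lying above $p^s_i$ for $v^s_i\in U$. *)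

theory Defs
  imports "HOL-Analysis.Analysis"
begin

type_synonym point3 = "real \<times> real \<times> real"
type_synonym point2 = "real \<times> real"

definition proj :: "point3 \<Rightarrow> point2" where
  "proj p = (fst p, fst (snd p))"

definition zc :: "point3 \<Rightarrow> real" where
  "zc p = snd (snd p)"

definition nonvertical_segment :: "point3 set \<Rightarrow> bool" where
  "nonvertical_segment s \<longleftrightarrow> (\<exists>a b. s = closed_segment a b \<and> proj a \<noteq> proj b)"

definition general_position :: "point3 set set \<Rightarrow> bool" where
  "general_position S \<longleftrightarrow>
     (\<forall>s\<in>S. \<forall>t\<in>S. s \<noteq> t \<longrightarrow> s \<inter> t = {}) \<and>
     (\<forall>s\<in>S. \<forall>t\<in>S. s \<noteq> t \<longrightarrow>
        (\<forall>x y. x \<in> proj ` s \<inter> proj ` t \<and> y \<in> proj ` s \<inter> proj ` t \<longrightarrow> x = y)) \<and>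
     (\<forall>x. \<not> (\<exists>s\<in>S. \<exists>t\<in>S. \<exists>u\<in>S. s \<noteq> t \<and> s \<noteq> u \<and> t \<noteq> u \<and>
                x \<in> proj ` s \<and> x \<in> proj ` t \<and> x \<in> proj ` u))"

definition above :: "point3 set \<Rightarrow> point3 set \<Rightarrow> bool" where
  "above P Q \<longleftrightarrow> (\<exists>p\<in>P. \<exists>q\<in>Q. proj p = proj q \<and> zc p > zc q)"

definition has_depth_cycle :: "point3 set set \<Rightarrow> bool" where
  "has_depth_cycle T \<longleftrightarrow>
     (\<exists>f :: nat \<Rightarrow> point3 set. \<exists>p::nat. p \<ge> 2 \<and> (\<forall>i<p. f i \<in> T) \<and>
        (\<forall>i. i + 1 < p \<longrightarrow> above (f i) (f (i + 1))) \<and> f (p - 1) = f 0)"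

definition pieces :: "point3 set set \<Rightarrow> point3 set \<Rightarrow> point3 set set" where
  "pieces S C = (\<Union>s\<in>S. components (s - C))"

definition mixed_cycle :: "'v set \<Rightarrow> 'v set set \<Rightarrow> ('v \<times> 'v) set \<Rightarrow> (nat \<Rightarrow> 'v) \<Rightarrow> nat \<Rightarrow> bool" where
  "mixed_cycle V E A v l \<longleftrightarrow>
     l \<ge> 3 \<and> v (l - 1) = v 0 \<and> (\<forall>i<l. v i \<in> V) \<and>
     (\<forall>i j. i < l - 1 \<and> j < l - 1 \<and> i \<noteq> j \<longrightarrow> v i \<noteq> v j) \<and>
     (\<exists>use_arc :: nat \<Rightarrow> bool.
        (\<forall>i < l - 1. (use_arc i \<longrightarrow> (v i, v (i + 1)) \<in> A) \<and>
                     (\<not> use_arc i \<longrightarrow> {v i, v (i + 1)} \<in> E)) \<and>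
        (\<forall>i j. i < l - 1 \<and> j < l - 1 \<and> i \<noteq> j \<and> \<not> use_arc i \<and> \<not> use_arc j \<longrightarrow>
               {v i, v (i + 1)} \<noteq> {v j, v (j + 1)}))"

definition has_mixed_cycle :: "'v set \<Rightarrow> 'v set set \<Rightarrow> ('v \<times> 'v) set \<Rightarrow> bool" where
  "has_mixed_cycle V E A \<longleftrightarrow> (\<exists>v l. mixed_cycle V E A v l)"

definition delete_vertices :: "'v set \<Rightarrow> 'v set \<Rightarrow> 'v set set \<Rightarrow> ('v \<times> 'v) set
    \<Rightarrow> 'v set \<times> 'v set set \<times> ('v \<times> 'v) set" where
  "delete_vertices U V E A = (V - U, {e \<in> E. e \<inter> U = {}}, {a \<in> A. fst a \<notin> U \<and> snd a \<notin> U})"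

definition feedback_vertex_set :: "'v set \<Rightarrow> 'v set set \<Rightarrow> ('v \<times> 'v) set \<Rightarrow> 'v set \<Rightarrow> bool" where
  "feedback_vertex_set V E A U \<longleftrightarrow> U \<subseteq> V \<and>
     (case delete_vertices U V E A of (V', E', A') \<Rightarrow> \<not> has_mixed_cycle V' E' A')"

text \<open>The graph G_S. The vertex v^s_i is represented as the pair (s, p^s_i);
  consecutive points of I(s) along the projection of s are joined by edges.\<close>
definition Ipts :: "point3 set set \<Rightarrow> point3 set \<Rightarrow> point2 set" where
  "Ipts S s = {x. x \<in> proj ` s \<and> (\<exists>t\<in>S. t \<noteq> s \<and> x \<in> proj ` t)}"

definition GS_V :: "point3 set set \<Rightarrow> (point3 set \<times> point2) set" where
  "GS_V S = {(s, x). s \<in> S \<and> x \<in> Ipts S s}"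

definition GS_E :: "point3 set set \<Rightarrow> (point3 set \<times> point2) set set" where
  "GS_E S = {{(s, x), (s, y)} | s x y. s \<in> S \<and> x \<in> Ipts S s \<and> y \<in> Ipts S s \<and> x \<noteq> y \<and>
                (\<forall>z \<in> Ipts S s. z \<notin> open_segment x y)}"

definition GS_A :: "point3 set set \<Rightarrow> ((point3 set \<times> point2) \<times> (point3 set \<times> point2)) set" where
  "GS_A S = {((s, x), (t, x)) | s t x. s \<in> S \<and> t \<in> S \<and> s \<noteq> t \<and> above s t \<and>
                x \<in> proj ` s \<inter> proj ` t}"

end

theory Submission
  imports Defs
begin

lemma param_closed:
  fixes P d :: "'a::real_vector"
  assumes "d \<noteq> 0"
  shows "P + u *\<^sub>R d \<in> closed_segment (P + t1 *\<^sub>R d) (P + t2 *\<^sub>R d) \<longleftrightarrow>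
         (t1 \<le> u \<and> u \<le> t2 \<or> t2 \<le> u \<and> u \<le> t1)"
proof -
  have lin: "linear (\<lambda>t::real. t *\<^sub>R d)" by (simp add: linear_scaleR_left)
  have "closed_segment (P + t1 *\<^sub>R d) (P + t2 *\<^sub>R d) = (\<lambda>t. P + t *\<^sub>R d) ` closed_segment t1 t2"
    using closed_segment_translation[of P "t1 *\<^sub>R d" "t2 *\<^sub>R d"]
      closed_segment_linear_image[OF lin, of t1 t2] by (simp add: image_image)
  moreover have "inj (\<lambda>t. P + t *\<^sub>R d)" using assms by (auto simp: inj_def)
  ultimately have "P + u *\<^sub>R d \<in> closed_segment (P + t1 *\<^sub>R d) (P + t2 *\<^sub>R d) \<longleftrightarrow> u \<in> closed_segment t1 t2"
    by (metis (no_types, lifting) image_iff injD)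
  then show ?thesis by (auto simp: closed_segment_eq_real_ivl)
qed

lemma param_open:
  fixes P d :: "'a::real_vector"
  assumes "d \<noteq> 0"
  shows "P + u *\<^sub>R d \<in> open_segment (P + t1 *\<^sub>R d) (P + t2 *\<^sub>R d) \<longleftrightarrow>
         (t1 < u \<and> u < t2 \<or> t2 < u \<and> u < t1)"
proof -
  have e: "P + u *\<^sub>R d = P + t *\<^sub>R d \<longleftrightarrow> u = t" for t
    using assms by auto
  show ?thesis unfolding open_segment_def using param_closed[OF assms, of P u t1 t2] e[of t1] e[of t2]
    by auto
qed

lemma proj_add: "proj (a + b) = proj a + proj b" by (simp add: proj_def)
lemma proj_diff: "proj (a - b) = proj a - proj b" by (simp add: proj_def)
lemma proj_scaleR: "proj (c *\<^sub>R a) = c *\<^sub>R proj a" by (simp add: proj_def)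
lemma linear_proj: "linear proj"
  by (rule linearI) (simp_all add: proj_add proj_scaleR)
lemma continuous_proj: "continuous_on A proj"
  unfolding proj_def by (intro continuous_intros)

definition eab :: "point3 set \<Rightarrow> point3 \<times> point3" where
  "eab s = (SOME ab. s = closed_segment (fst ab) (snd ab) \<and> proj (fst ab) \<noteq> proj (snd ab))"
definition ea where "ea s = fst (eab s)"
definition eb where "eb s = snd (eab s)"
definition dd :: "point3 set \<Rightarrow> point2" where "dd s = proj (eb s) - proj (ea s)"
definition tau :: "point3 set \<Rightarrow> point2 \<Rightarrow> real" where
  "tau s x = ((x - proj (ea s)) \<bullet> dd s) / (dd s \<bullet> dd s)"
definition lift :: "point3 set \<Rightarrow> point2 \<Rightarrow> point3" where
  "lift s x = ea s + tau s x *\<^sub>R (eb s - ea s)"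

lemma eab: assumes "nonvertical_segment s"
  shows "s = closed_segment (ea s) (eb s) \<and> proj (ea s) \<noteq> proj (eb s)"
proof -
  obtain a b where "s = closed_segment a b \<and> proj a \<noteq> proj b"
    using assms unfolding nonvertical_segment_def by blast
  then have "\<exists>ab. s = closed_segment (fst ab) (snd ab) \<and> proj (fst ab) \<noteq> proj (snd ab)"
    by (intro exI[of _ "(a,b)"]) simp
  from someI_ex[OF this] show ?thesis unfolding ea_def eb_def eab_def by simp
qed

lemma dd_nz: "nonvertical_segment s \<Longrightarrow> dd s \<noteq> 0"
  using eab[of s] by (auto simp: dd_def)

lemma tau_param: assumes "nonvertical_segment s"
  shows "tau s (proj (ea s) + u *\<^sub>R dd s) = u"
  using dd_nz[OF assms] by (simp add: tau_def)

lemma proj_param: "proj (ea s + u *\<^sub>R (eb s - ea s)) = proj (ea s) + u *\<^sub>R dd s"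
  by (simp add: proj_add proj_scaleR proj_diff dd_def)

lemma seg_param: assumes "nonvertical_segment s" "p \<in> s"
  shows "\<exists>u. 0 \<le> u \<and> u \<le> 1 \<and> p = ea s + u *\<^sub>R (eb s - ea s)"
proof -
  from assms eab[OF assms(1)] obtain u where "p = (1 - u) *\<^sub>R ea s + u *\<^sub>R eb s" "0 \<le> u" "u \<le> 1"
    by (metis in_segment(1))
  then show ?thesis by (intro exI[of _ u]) (simp add: algebra_simps)
qed

lemma lift_proj: assumes "nonvertical_segment s" "p \<in> s"
  shows "lift s (proj p) = p" and "0 \<le> tau s (proj p)" and "tau s (proj p) \<le> 1"
  using seg_param[OF assms] tau_param[OF assms(1)] proj_param
  by (auto simp: lift_def)

lemma proj_lift: assumes "nonvertical_segment s" "x \<in> proj ` s"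
  shows "proj (lift s x) = x" "lift s x \<in> s"
  using assms lift_proj by auto

lemma tau_inj: assumes "nonvertical_segment s" "x \<in> proj ` s" "y \<in> proj ` s" "tau s x = tau s y"
  shows "x = y"
  by (metis assms lift_def proj_lift(1))

lemma proj_inj_seg: assumes "nonvertical_segment s" "p \<in> s" "q \<in> s" "proj p = proj q"
  shows "p = q"
  by (metis assms lift_proj(1))

lemma projL: assumes "nonvertical_segment s" "x \<in> proj ` s"
  shows "x = proj (ea s) + tau s x *\<^sub>R dd s"
  by (metis assms lift_def proj_lift(1) proj_param)

lemma open_seg_L: assumes "nonvertical_segment s" "x \<in> proj ` s" "y \<in> proj ` s" "z \<in> proj ` s"
  shows "z \<in> open_segment x y \<longleftrightarrow> (tau s x < tau s z \<and> tau s z < tau s y \<or> tau s y < tau s z \<and> tau s z < tau s x)"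
  using param_open[OF dd_nz[OF assms(1)], of "proj (ea s)" "tau s z" "tau s x" "tau s y"]
    projL[OF assms(1)] assms by metis

lemma closed_seg_s: assumes "nonvertical_segment s" "p \<in> s" "q \<in> s" "r \<in> s"
  shows "r \<in> closed_segment p q \<longleftrightarrow> (tau s (proj p) \<le> tau s (proj r) \<and> tau s (proj r) \<le> tau s (proj q)
     \<or> tau s (proj q) \<le> tau s (proj r) \<and> tau s (proj r) \<le> tau s (proj p))"
proof -
  have nz: "eb s - ea s \<noteq> 0" using eab[OF assms(1)] by auto
  show ?thesis
    using param_closed[OF nz, of "ea s" "tau s (proj r)" "tau s (proj p)" "tau s (proj q)"]
      lift_proj(1)[OF assms(1)] assms unfolding lift_def by metis
qed

lemma finite_allsame: "(\<forall>x y. x \<in> A \<and> y \<in> A \<longrightarrow> x = y) \<Longrightarrow> finite A"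
proof (cases "A = {}")
  case False
  then obtain x where "x \<in> A" by blast
  moreover assume "\<forall>x y. x \<in> A \<and> y \<in> A \<longrightarrow> x = y"
  ultimately have "A \<subseteq> {x}" by blast
  then show ?thesis using finite_subset by blast
qed simp

lemma continuous_tau: "continuous_on A (tau s)"
  unfolding tau_def divide_inverse by (intro continuous_intros)

locale SG =
  fixes S :: "point3 set set"
  assumes finS: "finite S" and nv: "\<forall>s\<in>S. nonvertical_segment s" and gp: "general_position S"
begin

lemma nvS: "s \<in> S \<Longrightarrow> nonvertical_segment s" using nv by blast

lemma gp1: "\<forall>s\<in>S. \<forall>t\<in>S. s \<noteq> t \<longrightarrow> s \<inter> t = {}"
  using gp unfolding general_position_def by (rule conjunct1)
lemma gp2: "\<forall>s\<in>S. \<forall>t\<in>S. s \<noteq> t \<longrightarrow>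
        (\<forall>x y. x \<in> proj ` s \<inter> proj ` t \<and> y \<in> proj ` s \<inter> proj ` t \<longrightarrow> x = y)"
  using gp unfolding general_position_def by (metis (no_types, lifting))

lemma disj: "s \<in> S \<Longrightarrow> t \<in> S \<Longrightarrow> s \<noteq> t \<Longrightarrow> s \<inter> t = {}"
  using gp1 by blast

lemma disj_pt: "s \<in> S \<Longrightarrow> t \<in> S \<Longrightarrow> p \<in> s \<Longrightarrow> p \<in> t \<Longrightarrow> s = t"
  using disj by blast

lemma cross_uniq: "s \<in> S \<Longrightarrow> t \<in> S \<Longrightarrow> s \<noteq> t \<Longrightarrow> x \<in> proj ` s \<Longrightarrow> x \<in> proj ` t
   \<Longrightarrow> y \<in> proj ` s \<Longrightarrow> y \<in> proj ` t \<Longrightarrow> x = y"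
  using gp2 by blast

lemma Ipts_sub: "Ipts S s \<subseteq> proj ` s" unfolding Ipts_def by blast

lemma finite_Ipts: assumes "s \<in> S" shows "finite (Ipts S s)"
proof -
  have "Ipts S s \<subseteq> (\<Union>t\<in>S - {s}. proj ` s \<inter> proj ` t)" unfolding Ipts_def by blast
  moreover have "finite (proj ` s \<inter> proj ` t)" if "t \<in> S - {s}" for t
  proof (rule finite_allsame, intro allI impI)
    fix x y assume "x \<in> proj ` s \<inter> proj ` t \<and> y \<in> proj ` s \<inter> proj ` t"
    then show "x = y" using cross_uniq[of s t x y] that assms by blast
  qed
  moreover have "finite (\<Union>t\<in>S - {s}. proj ` s \<inter> proj ` t)"
    using finS calculation(2) by (intro finite_UN_I) auto
  ultimately show ?thesis using finite_subset by blast
qed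

lemma finite_V: "finite (GS_V S)"
proof -
  have "GS_V S = Sigma S (Ipts S)" unfolding GS_V_def by auto
  then show ?thesis using finS finite_Ipts by auto
qed


end

context SG begin

lemma piece_seg: "P \<in> pieces S C \<Longrightarrow> \<exists>s\<in>S. P \<in> components (s - C)"
  unfolding pieces_def by blast

lemma pieces_eq: assumes "s \<in> S" "t \<in> S" "P \<in> components (s - C)" "Q \<in> components (t - C)"
  "p \<in> P" "p \<in> Q" shows "s = t" "P = Q"
proof -
  show "s = t" using assms in_components_subset disj_pt by blast
  then show "P = Q" using assms components_eq by blast
qed

lemma no_above_same: assumes "s \<in> S" "P \<subseteq> s" "Q \<subseteq> s" shows "\<not> above P Q"
  using assms proj_inj_seg[OF nvS[OF assms(1)]] unfolding above_def by fastforce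

lemma above_pieces: assumes "s \<in> S" "t \<in> S" "P \<subseteq> s" "Q \<subseteq> t" "above P Q"
  shows "s \<noteq> t" "above s t" "\<exists>x. x \<in> proj ` s \<and> x \<in> proj ` t \<and> lift s x \<in> P \<and> lift t x \<in> Q
     \<and> zc (lift s x) > zc (lift t x)"
proof -
  show "s \<noteq> t" using no_above_same assms by blast
  obtain p q where pq: "p \<in> P" "q \<in> Q" "proj p = proj q" "zc p > zc q"
    using assms(5) unfolding above_def by blast
  then show "above s t" using assms unfolding above_def by blast
  show "\<exists>x. x \<in> proj ` s \<and> x \<in> proj ` t \<and> lift s x \<in> P \<and> lift t x \<in> Q
     \<and> zc (lift s x) > zc (lift t x)"
  proof (intro exI[of _ "proj p"] conjI)
    have ps: "p \<in> s" "q \<in> t" using pq assms by auto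
    show "proj p \<in> proj ` s" using ps by blast
    show "proj p \<in> proj ` t" using ps pq(3) by (metis imageI)
    have l: "lift s (proj p) = p" "lift t (proj q) = q"
      using lift_proj(1)[OF nvS[OF assms(1)] ps(1)] lift_proj(1)[OF nvS[OF assms(2)] ps(2)] by auto
    show "lift s (proj p) \<in> P" "lift t (proj p) \<in> Q" "zc (lift s (proj p)) > zc (lift t (proj p))"
      using l pq by auto
  qed
qed

lemma above_seg_lift: assumes "s \<in> S" "t \<in> S" "s \<noteq> t" "x \<in> proj ` s" "x \<in> proj ` t" "above s t"
  shows "zc (lift s x) > zc (lift t x)"
proof -
  obtain p q where pq: "p \<in> s" "q \<in> t" "proj p = proj q" "zc p > zc q"
    using assms(6) unfolding above_def by blast
  have "proj p \<in> proj ` s" "proj p \<in> proj ` t" using pq by (auto, metis imageI)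
  then have "proj p = x" using cross_uniq[OF assms(1-3) _ _ assms(4,5), of "proj p"] by auto
  then show ?thesis using pq lift_proj(1)[OF nvS[OF assms(1)], of p] lift_proj(1)[OF nvS[OF assms(2)], of q]
    by auto
qed

lemma no2cycle: assumes "s \<in> S" "t \<in> S" "P \<subseteq> s" "Q \<subseteq> t" "above P Q" "above Q P"
  shows False
proof -
  have st: "s \<noteq> t" "above s t" "above t s" using above_pieces assms by blast+
  obtain x where "x \<in> proj ` s" "x \<in> proj ` t" using above_pieces(3)[OF assms(1-5)] by blast
  then show False using above_seg_lift[OF assms(1,2) st(1)] above_seg_lift[OF assms(2,1) st(1)[symmetric]] st
    by fastforce
qed

lemma comp_convex: assumes "s \<in> S" "P \<in> components (s - C)" "p \<in> P" "q \<in> P" "r \<in> s"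
  "tau s (proj p) \<le> tau s (proj r)" "tau s (proj r) \<le> tau s (proj q)"
  shows "r \<in> P"
proof -
  let ?g = "\<lambda>z. tau s (proj z)"
  have "continuous_on P ?g"
    using continuous_on_compose[OF continuous_proj continuous_tau] by (simp add: o_def)
  then have "connected (?g ` P)" using connected_continuous_image in_components_connected assms(2) by blast
  then have "?g r \<in> ?g ` P" using connectedD_interval assms by (meson imageI)
  then obtain r' where r': "r' \<in> P" "?g r' = ?g r" by auto
  have "r' \<in> s" using r' assms(2) in_components_subset by blast
  then have "r' = r" using r' lift_proj(1)[OF nvS[OF assms(1)]] assms(5) unfolding lift_def by metis
  then show ?thesis using r' by simp
qed

lemma same_comp: assumes "s \<in> S" "p \<in> s" "q \<in> s" "closed_segment p q \<inter> C = {}"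
  shows "connected_component_set (s - C) p = connected_component_set (s - C) q"
proof -
  have conv: "convex s" using eab[OF nvS[OF assms(1)]] by (metis convex_closed_segment)
  have "closed_segment p q \<subseteq> s - C" using closed_segment_subset[OF assms(2,3) conv] assms(4) by blast
  then have "q \<in> connected_component_set (s - C) p"
    using connected_component_maximal[of p "closed_segment p q" "s - C"] by auto
  then show ?thesis using connected_component_eq by blast
qed

end




lemma cycle_of_list:
  assumes d: "distinct xs" and len: "length xs \<ge> 3" and sub: "set xs \<subseteq> V"
    and suc: "successively (\<lambda>u w. (u, w) \<in> A \<or> {u, w} \<in> E) (xs @ [hd xs])"
  shows "has_mixed_cycle V E A"
proof -
  define n where "n = length xs"
  define v where "v i = xs ! (i mod n)" for i
  have n3: "n \<ge> 3" using len n_def by simp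
  have vi: "v i = xs ! i" if "i < n" for i using that v_def by simp
  have vn: "v n = v 0" using v_def by simp
  have step: "(v i, v (i + 1)) \<in> A \<or> {v i, v (i + 1)} \<in> E" if "i < n" for i
  proof -
    let ?ys = "xs @ [hd xs]"
    have "Suc i < length ?ys" using that n_def by simp
    then have "(?ys ! i, ?ys ! Suc i) \<in> A \<or> {?ys ! i, ?ys ! Suc i} \<in> E"
      using suc unfolding successively_conv_nth by blast
    moreover have "?ys ! i = v i" using that vi n_def by (simp add: nth_append)
    moreover have "?ys ! Suc i = v (i + 1)"
    proof (cases "Suc i < n")
      case True then show ?thesis using vi n_def by (simp add: nth_append)
    next
      case False then have "Suc i = n" using that by simp
      moreover have "xs \<noteq> []" using n3 n_def by auto
      ultimately show ?thesis using vn n_def n3 by (simp add: nth_append hd_conv_nth v_def)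
    qed
    ultimately show ?thesis by simp
  qed
  have distv: "v i \<noteq> v j" if "i < n" "j < n" "i \<noteq> j" for i j
    using that vi d n_def by (simp add: nth_eq_iff_index_eq)
  have mod_eq: "v (i + 1) = xs ! ((i + 1) mod n)" for i using v_def by simp
  define ua where "ua i = ((v i, v (i + 1)) \<in> A)" for i
  have "mixed_cycle V E A v (n + 1)"
    unfolding mixed_cycle_def
  proof (intro conjI allI impI)
    show "3 \<le> n + 1" using n3 by simp
    show "v (n + 1 - 1) = v 0" using vn by simp
    show "v i \<in> V" if "i < n + 1" for i
    proof -
      have "0 < n" using n3 by simp
      then have "i mod n < length xs" using n_def by (metis mod_less_divisor)
      then have "xs ! (i mod n) \<in> V" using sub nth_mem by blast
      then show ?thesis by (simp add: v_def)
    qed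
    show "v i \<noteq> v j" if "i < n + 1 - 1 \<and> j < n + 1 - 1 \<and> i \<noteq> j" for i j
      using distv that by simp
    show "\<exists>use_arc. (\<forall>i<n + 1 - 1. (use_arc i \<longrightarrow> (v i, v (i + 1)) \<in> A) \<and>
                     (\<not> use_arc i \<longrightarrow> {v i, v (i + 1)} \<in> E)) \<and>
        (\<forall>i j. i < n + 1 - 1 \<and> j < n + 1 - 1 \<and> i \<noteq> j \<and> \<not> use_arc i \<and> \<not> use_arc j \<longrightarrow>
               {v i, v (i + 1)} \<noteq> {v j, v (j + 1)})"
    proof (intro exI[of _ ua] conjI allI impI)
      fix i assume "i < n + 1 - 1"
      then show "ua i \<Longrightarrow> (v i, v (i + 1)) \<in> A" "\<not> ua i \<Longrightarrow> {v i, v (i + 1)} \<in> E"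
        using step ua_def by auto
    next
      fix i j assume h: "i < n + 1 - 1 \<and> j < n + 1 - 1 \<and> i \<noteq> j \<and> \<not> ua i \<and> \<not> ua j"
      show "{v i, v (i + 1)} \<noteq> {v j, v (j + 1)}"
      proof
        assume eq: "{v i, v (i + 1)} = {v j, v (j + 1)}"
        have vv: "v k = v m \<Longrightarrow> k < n \<Longrightarrow> m < n \<Longrightarrow> k = m" for k m using distv by blast
        have vs: "v (k + 1) = v ((k + 1) mod n)" for k using v_def by simp
        have lt: "(k + 1) mod n < n" for k using n3 by simp
        from eq have "v i = v j \<or> (v i = v (j + 1) \<and> v (i + 1) = v j)" by (auto simp: doubleton_eq_iff)
        then show False
        proof
          assume "v i = v j" then show False using vv h by auto
        next
          assume a: "v i = v (j + 1) \<and> v (i + 1) = v j"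
          then have "i = (j + 1) mod n" "(i + 1) mod n = j"
            using vv[of i "(j+1) mod n"] vv[of "(i+1) mod n" j] vs lt h by auto
          then have ij: "i = (j + 1) mod n" "(i + 1) mod n = j" .
          have jn: "j < n" "i < n" using h by auto
          show False
          proof (cases "j + 1 < n")
            case True
            then have "i = j + 1" using ij by simp
            then have j2: "(j + 2) mod n = j" using ij by simp
            show False
            proof (cases "j + 2 < n")
              case True then show False using j2 by simp
            next
              case False then have "j + 2 = n" using \<open>j + 1 < n\<close> by simp
              then show False using j2 n3 by simp
            qed
          next
            case False then have "j + 1 = n" using jn by simp
            then have "i = 0" using ij by simp
            then have "j = 1 mod n" using ij by simp
            then have "j = 1" using n3 by simp
            then show False using \<open>j + 1 = n\<close> n3 by simp
          qed
        qed
      qed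
    qed
  qed
  then show ?thesis unfolding has_mixed_cycle_def by blast
qed


lemma succ_concat:
  assumes "\<And>i. a \<le> i \<Longrightarrow> i < b \<Longrightarrow> ps i \<noteq> [] \<and> successively P (ps i)"
    and "\<And>i. a \<le> i \<Longrightarrow> Suc i < b \<Longrightarrow> P (last (ps i)) (hd (ps (Suc i)))"
  shows "successively P (concat (map ps [a..<b]))
     \<and> (a < b \<longrightarrow> last (concat (map ps [a..<b])) = last (ps (b - 1))
         \<and> hd (concat (map ps [a..<b])) = hd (ps a))"
  using assms
proof (induction b)
  case 0 then show ?case by simp
next
  case (Suc b)
  show ?case
  proof (cases "a < b")
    case False
    then show ?thesis using Suc.prems
      by (cases "a = b") auto
  next
    case True
    have IH: "successively P (concat (map ps [a..<b]))"
       "last (concat (map ps [a..<b])) = last (ps (b - 1))"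
       "hd (concat (map ps [a..<b])) = hd (ps a)" using Suc True by auto
    have ne: "concat (map ps [a..<b]) \<noteq> []" using Suc.prems(1)[of a] True by auto
    have eq: "concat (map ps [a..<Suc b]) = concat (map ps [a..<b]) @ ps b"
      using True by simp
    have pb: "ps b \<noteq> []" "successively P (ps b)" using Suc.prems(1)[of b] True by auto
    have link: "P (last (ps (b - 1))) (hd (ps b))" using Suc.prems(2)[of "b - 1"] True by simp
    show ?thesis unfolding eq using IH ne pb link
      by (auto simp: successively_append_iff)
  qed
qed

lemma length_concat_ge:
  "(\<And>i. i \<in> set l \<Longrightarrow> ps i \<noteq> []) \<Longrightarrow> length (concat (map ps l)) \<ge> length l"
proof (induction l)
  case (Cons a l)
  then have "length (ps a) \<ge> 1" by (metis One_nat_def Suc_leI length_greater_0_conv list.set_intros(1))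
  then show ?case using Cons by simp
qed simp

definition RT :: "point3 set set \<Rightarrow> (point3 set \<times> point3 set) set" where
  "RT T = {(P, Q). P \<in> T \<and> Q \<in> T \<and> above P Q}"

lemma dc_iff: "has_depth_cycle T \<longleftrightarrow> (\<exists>P n. n > 0 \<and> (P, P) \<in> (RT T) ^^ n)"
proof
  assume "has_depth_cycle T"
  then obtain f and p :: nat where fp: "p \<ge> 2" "\<forall>i<p. f i \<in> T" "\<forall>i. i + 1 < p \<longrightarrow> above (f i) (f (i + 1))"
    "f (p - 1) = f 0" unfolding has_depth_cycle_def by blast
  have "(f 0, f 0) \<in> (RT T) ^^ (p - 1)"
    unfolding relpow_fun_conv
  proof (intro exI[of _ f] conjI allI impI)
    fix i assume "i < p - 1"
    then show "(f i, f (Suc i)) \<in> RT T" using fp unfolding RT_def by auto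
  qed (use fp in auto)
  then show "\<exists>P n. n > 0 \<and> (P, P) \<in> (RT T) ^^ n" using fp(1)
    by (intro exI[of _ "f 0"] exI[of _ "p - 1"]) auto
next
  assume "\<exists>P n. n > 0 \<and> (P, P) \<in> (RT T) ^^ n"
  then obtain P n f where h: "n > 0" "f 0 = P" "f n = P" "\<forall>i<n. (f i, f (Suc i)) \<in> RT T"
    unfolding relpow_fun_conv by blast
  show "has_depth_cycle T" unfolding has_depth_cycle_def
  proof (intro exI[of _ f] exI[of _ "n + 1"] conjI allI impI)
    fix i assume "i < n + 1"
    then show "f i \<in> T"
    proof (cases "i < n")
      case True then show ?thesis using h unfolding RT_def by auto
    next
      case False then have "i = n" using \<open>i < n + 1\<close> by simp
      moreover have "f 0 \<in> T" using h unfolding RT_def by auto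
      ultimately show ?thesis using h by simp
    qed
  next
    fix i assume "i + 1 < n + 1"
    then show "above (f i) (f (i + 1))" using h unfolding RT_def by auto
  qed (use h in auto)
qed

lemma min_cycle:
  assumes "has_depth_cycle T"
  shows "\<exists>f n. n > 0 \<and> f n = f 0 \<and> (\<forall>i<n. (f i, f (Suc i)) \<in> RT T) \<and> inj_on f {..<n}"
proof -
  let ?Q = "\<lambda>n. n > 0 \<and> (\<exists>P. (P, P) \<in> (RT T) ^^ n)"
  obtain n0 where "?Q n0" using assms dc_iff by blast
  define n where "n = (LEAST n. ?Q n)"
  have Qn: "?Q n" unfolding n_def by (rule LeastI) fact
  then obtain P f where h: "f 0 = P" "f n = P" "\<forall>i<n. (f i, f (Suc i)) \<in> RT T"
    unfolding relpow_fun_conv by blast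
  have "inj_on f {..<n}"
  proof (rule inj_onI, rule ccontr)
    fix i j assume ij: "i \<in> {..<n}" "j \<in> {..<n}" "f i = f j" "i \<noteq> j"
    have key: "False" if "i < j" "i < n" "j < n" "f i = f j" for i j
    proof -
      have "(f i, f i) \<in> (RT T) ^^ (j - i)"
        unfolding relpow_fun_conv
        by (intro exI[of _ "\<lambda>k. f (i + k)"]) (use that h in auto)
      then have "?Q (j - i)" using that by auto
      then have "n \<le> j - i" unfolding n_def by (rule Least_le)
      then show False using that by simp
    qed
    show False
    proof (cases "i < j")
      case True then show False using key ij by auto
    next
      case False then show False using key[of j i] ij by auto
    qed
  qed
  then show ?thesis using Qn h by (intro exI[of _ f] exI[of _ n]) auto
qed


context SG begin

lemma E_struct: assumes "{u, w} \<in> GS_E S"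
  shows "fst u = fst w" "fst u \<in> S" "snd u \<in> Ipts S (fst u)" "snd w \<in> Ipts S (fst u)"
    "snd u \<noteq> snd w" "\<forall>z\<in>Ipts S (fst u). z \<notin> open_segment (snd u) (snd w)"
proof -
  obtain s x y where h: "{u, w} = {(s, x), (s, y)}" "s \<in> S" "x \<in> Ipts S s" "y \<in> Ipts S s" "x \<noteq> y"
    "\<forall>z \<in> Ipts S s. z \<notin> open_segment x y"
    using assms unfolding GS_E_def by blast
  then have c: "(u = (s, x) \<and> w = (s, y)) \<or> (u = (s, y) \<and> w = (s, x))"
    by (auto simp: doubleton_eq_iff)
  show "fst u = fst w" "fst u \<in> S" "snd u \<in> Ipts S (fst u)" "snd w \<in> Ipts S (fst u)"
    "snd u \<noteq> snd w" using c h by auto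
  show "\<forall>z\<in>Ipts S (fst u). z \<notin> open_segment (snd u) (snd w)"
    using c h by (auto simp: open_segment_commute)
qed

lemma E_intro: "s \<in> S \<Longrightarrow> x \<in> Ipts S s \<Longrightarrow> y \<in> Ipts S s \<Longrightarrow> x \<noteq> y \<Longrightarrow>
  \<forall>z\<in>Ipts S s. z \<notin> open_segment x y \<Longrightarrow> {(s, x), (s, y)} \<in> GS_E S"
  unfolding GS_E_def by blast

lemma A_struct: assumes "(u, w) \<in> GS_A S"
  shows "snd u = snd w" "fst u \<in> S" "fst w \<in> S" "fst u \<noteq> fst w" "above (fst u) (fst w)"
    "snd u \<in> proj ` fst u" "snd u \<in> proj ` fst w"
proof -
  obtain s t x where h: "u = (s, x)" "w = (t, x)" "s \<in> S" "t \<in> S" "s \<noteq> t" "above s t"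
    "x \<in> proj ` s" "x \<in> proj ` t"
    using assms unfolding GS_A_def by blast
  then show "snd u = snd w" "fst u \<in> S" "fst w \<in> S" "fst u \<noteq> fst w" "above (fst u) (fst w)"
    "snd u \<in> proj ` fst u" "snd u \<in> proj ` fst w" by simp_all
qed

lemma Ipts_L: "x \<in> Ipts S s \<Longrightarrow> x \<in> proj ` s" unfolding Ipts_def by blast

lemma A_intro: "s \<in> S \<Longrightarrow> t \<in> S \<Longrightarrow> s \<noteq> t \<Longrightarrow> above s t \<Longrightarrow> x \<in> proj ` s \<Longrightarrow> x \<in> proj ` t
  \<Longrightarrow> ((s, x), (t, x)) \<in> GS_A S"
  unfolding GS_A_def by blast

lemma Ipts_intro: "t \<in> S \<Longrightarrow> s \<noteq> t \<Longrightarrow> x \<in> proj ` s \<Longrightarrow> x \<in> proj ` t \<Longrightarrow> x \<in> Ipts S s"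
  unfolding Ipts_def by blast

lemma lower_unique: assumes "{(s, x), (s, y1)} \<in> GS_E S" "{(s, x), (s, y2)} \<in> GS_E S"
  "tau s y1 < tau s x" "tau s y2 < tau s x" shows "y1 = y2"
proof -
  have e1: "s \<in> S" "x \<in> Ipts S s" "y1 \<in> Ipts S s" "\<forall>z\<in>Ipts S s. z \<notin> open_segment x y1"
    using E_struct[OF assms(1)] by auto
  have e2: "y2 \<in> Ipts S s" "\<forall>z\<in>Ipts S s. z \<notin> open_segment x y2"
    using E_struct[OF assms(2)] by auto
  have nv: "nonvertical_segment s" using nvS e1 by blast
  have L: "x \<in> proj ` s" "y1 \<in> proj ` s" "y2 \<in> proj ` s" using e1 e2 Ipts_L by blast+
  have "\<not> tau s y1 < tau s y2"
    using e1(4) e2(1) open_seg_L[OF nv L(1,2,3)] assms by auto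
  moreover have "\<not> tau s y2 < tau s y1"
    using e2(2) e1(3) open_seg_L[OF nv L(1,3,2)] assms by auto
  ultimately show ?thesis using tau_inj[OF nv L(2,3)] by simp
qed

lemma pp_vertex: assumes "s \<in> S" "P \<in> components (s - C)" "\<forall>v\<in>U. lift (fst v) (snd v) \<in> C"
  "z \<in> Ipts S s" "lift s z \<in> P"
  shows "(s, z) \<in> GS_V S" "(s, z) \<notin> U"
proof -
  show "(s, z) \<in> GS_V S" using assms unfolding GS_V_def by simp
  have "lift s z \<notin> C" using assms(2,5) in_components_subset by blast
  then show "(s, z) \<notin> U" using assms(3) by force
qed

lemma pp_mono:
  assumes s: "s \<in> S" and P: "P \<in> components (s - C)" and hU: "\<forall>v\<in>U. lift (fst v) (snd v) \<in> C"
    and y: "y \<in> Ipts S s" "lift s y \<in> P"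
  shows "x \<in> Ipts S s \<Longrightarrow> lift s x \<in> P \<Longrightarrow> tau s x \<le> tau s y \<Longrightarrow>
    \<exists>ys. ys \<noteq> [] \<and> hd ys = (s, x) \<and> last ys = (s, y) \<and> distinct ys \<and>
      successively (\<lambda>u w. {u, w} \<in> GS_E S \<and> {u, w} \<inter> U = {}) ys \<and>
      (\<forall>v\<in>set ys. v \<in> GS_V S \<and> v \<notin> U \<and> fst v = s \<and> snd v \<in> Ipts S s \<and> lift s (snd v) \<in> P
         \<and> tau s x \<le> tau s (snd v) \<and> tau s (snd v) \<le> tau s y)"
proof (induction "card {z\<in>Ipts S s. tau s x < tau s z \<and> tau s z < tau s y}" arbitrary: x rule: less_induct)
  case less
  have nv: "nonvertical_segment s" using nvS s by blast
  let ?B = "{z\<in>Ipts S s. tau s x < tau s z \<and> tau s z < tau s y}"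
  have finB: "finite ?B" using finite_Ipts[OF s] by simp
  have Lx: "x \<in> proj ` s" "y \<in> proj ` s" using less.prems y Ipts_L by blast+
  have vx: "(s, x) \<in> GS_V S" "(s, x) \<notin> U" using pp_vertex[OF s P hU less.prems(1,2)] by auto
  have vy: "(s, y) \<in> GS_V S" "(s, y) \<notin> U" using pp_vertex[OF s P hU y] by auto
  show ?case
  proof (cases "tau s x = tau s y")
    case True
    then have "x = y" using tau_inj[OF nv Lx] by simp
    then show ?thesis using vx less.prems by (intro exI[of _ "[(s, x)]"]) auto
  next
    case False
    then have lt: "tau s x < tau s y" using less.prems by simp
    show ?thesis
    proof (cases "?B = {}")
      case True
      have "{(s, x), (s, y)} \<in> GS_E S"
      proof (rule E_intro[OF s less.prems(1) y(1)])
        show "x \<noteq> y" using lt by auto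
        show "\<forall>z\<in>Ipts S s. z \<notin> open_segment x y"
        proof (intro ballI notI)
          fix z assume z: "z \<in> Ipts S s" "z \<in> open_segment x y"
          have "tau s x < tau s z \<and> tau s z < tau s y"
            using open_seg_L[OF nv Lx Ipts_L[OF z(1)]] z lt by auto
          then have "z \<in> ?B" using z by blast
          then show False using True by blast
        qed
      qed
      then show ?thesis using vx vy lt less.prems y
        by (intro exI[of _ "[(s, x), (s, y)]"]) auto
    next
      case False
      define m where "m = Min (tau s ` ?B)"
      have "m \<in> tau s ` ?B" unfolding m_def using False finB by (intro Min_in) auto
      then obtain z where z: "z \<in> ?B" "tau s z = m" by blast
      have zmin: "tau s z \<le> tau s w" if "w \<in> ?B" for w
        using z finB that unfolding m_def by (simp add: Min_le)
      have Lz: "z \<in> proj ` s" using z Ipts_L by blast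
      have lz: "lift s z \<in> P"
      proof (rule comp_convex[OF s P less.prems(2) y(2)])
        show "lift s z \<in> s" using proj_lift[OF nv Lz] by simp
        show "tau s (proj (lift s x)) \<le> tau s (proj (lift s z))"
          "tau s (proj (lift s z)) \<le> tau s (proj (lift s y))"
          using proj_lift[OF nv Lz] proj_lift[OF nv Lx(1)] proj_lift[OF nv Lx(2)] z by auto
      qed
      have edge: "{(s, x), (s, z)} \<in> GS_E S"
      proof (rule E_intro[OF s less.prems(1)])
        show "z \<in> Ipts S s" using z by simp
        show "x \<noteq> z" using z by auto
        show "\<forall>w\<in>Ipts S s. w \<notin> open_segment x z"
        proof (intro ballI notI)
          fix w assume w: "w \<in> Ipts S s" "w \<in> open_segment x z"
          then have Lw: "w \<in> proj ` s" using Ipts_L by blast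
          have "tau s x < tau s w \<and> tau s w < tau s z" using w open_seg_L[OF nv Lx(1) Lz Lw] z by auto
          then have "w \<in> ?B" using w z by auto
          then show False using zmin \<open>tau s x < tau s w \<and> tau s w < tau s z\<close> by fastforce
        qed
      qed
      have sub: "{w\<in>Ipts S s. tau s z < tau s w \<and> tau s w < tau s y} \<subset> ?B"
        using z by auto
      have "card {w\<in>Ipts S s. tau s z < tau s w \<and> tau s w < tau s y} < card ?B"
        using psubset_card_mono[OF finB sub] .
      from less.hyps[OF this] obtain ys where ys: "ys \<noteq> []" "hd ys = (s, z)" "last ys = (s, y)"
        "distinct ys" "successively (\<lambda>u w. {u, w} \<in> GS_E S \<and> {u, w} \<inter> U = {}) ys"
        "\<forall>v\<in>set ys. v \<in> GS_V S \<and> v \<notin> U \<and> fst v = s \<and> snd v \<in> Ipts S s \<and> lift s (snd v) \<in> P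
         \<and> tau s z \<le> tau s (snd v) \<and> tau s (snd v) \<le> tau s y"
        using z lz by auto
      have vz: "(s, z) \<notin> U" using pp_vertex[OF s P hU _ lz] z by auto
      have "(s, x) \<notin> set ys" using ys(6) z by fastforce
      moreover have "successively (\<lambda>u w. {u, w} \<in> GS_E S \<and> {u, w} \<inter> U = {}) ((s, x) # ys)"
        using ys(1,2,5) edge vx vz by (cases ys) auto
      ultimately show ?thesis using ys vx less.prems z
        by (intro exI[of _ "(s, x) # ys"]) (auto simp: Ipts_def)
    qed
  qed
qed


lemma path_in_piece:
  assumes s: "s \<in> S" and P: "P \<in> components (s - C)" and hU: "\<forall>v\<in>U. lift (fst v) (snd v) \<in> C"
    and x: "x \<in> Ipts S s" "lift s x \<in> P" and y: "y \<in> Ipts S s" "lift s y \<in> P"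
  shows "\<exists>ys. ys \<noteq> [] \<and> hd ys = (s, x) \<and> last ys = (s, y) \<and> distinct ys \<and>
      successively (\<lambda>u w. {u, w} \<in> GS_E S \<and> {u, w} \<inter> U = {}) ys \<and>
      (\<forall>v\<in>set ys. v \<in> GS_V S \<and> v \<notin> U \<and> fst v = s \<and> lift s (snd v) \<in> P)"
proof (cases "tau s x \<le> tau s y")
  case True
  from pp_mono[OF s P hU y x True] show ?thesis by blast
next
  case False
  then have le: "tau s y \<le> tau s x" by simp
  from pp_mono[OF s P hU x y le] obtain ys where ys: "ys \<noteq> []" "hd ys = (s, y)" "last ys = (s, x)" "distinct ys"
    "successively (\<lambda>u w. {u, w} \<in> GS_E S \<and> {u, w} \<inter> U = {}) ys"
    "\<forall>v\<in>set ys. v \<in> GS_V S \<and> v \<notin> U \<and> fst v = s \<and> lift s (snd v) \<in> P" by blast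
  have sym: "(\<lambda>u w. {w, u} \<in> GS_E S \<and> {w, u} \<inter> U = {}) = (\<lambda>u w. {u, w} \<in> GS_E S \<and> {u, w} \<inter> U = {})"
    by (intro ext) (simp add: insert_commute)
  have "successively (\<lambda>u w. {u, w} \<in> GS_E S \<and> {u, w} \<inter> U = {}) (rev ys)"
    unfolding successively_rev sym using ys(5) .
  then show ?thesis using ys
    by (intro exI[of _ "rev ys"]) (auto simp: hd_rev last_rev)
qed

lemma fvs_to_cuts:
  assumes fvs: "feedback_vertex_set (GS_V S) (GS_E S) (GS_A S) U"
  defines "C \<equiv> (\<lambda>v. lift (fst v) (snd v)) ` U"
  shows "\<not> has_depth_cycle (pieces S C)"
proof
  let ?V' = "GS_V S - U" and ?E' = "{e \<in> GS_E S. e \<inter> U = {}}"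
    and ?A' = "{a \<in> GS_A S. fst a \<notin> U \<and> snd a \<notin> U}"
  let ?T = "pieces S C"
  have hU: "\<forall>v\<in>U. lift (fst v) (snd v) \<in> C" unfolding C_def by blast
  have nomc: "\<not> has_mixed_cycle ?V' ?E' ?A'"
    using fvs unfolding feedback_vertex_set_def delete_vertices_def by simp
  assume "has_depth_cycle ?T"
  then obtain f n where fn: "n > 0" "f n = f 0" "\<forall>i<n. (f i, f (Suc i)) \<in> RT ?T" "inj_on f {..<n}"
    using min_cycle by blast
  define F where "F i = f (i mod n)" for i
  have FR: "(F i, F (Suc i)) \<in> RT ?T" for i
  proof -
    have lt: "i mod n < n" using fn(1) by simp
    have "F (Suc i) = f (Suc (i mod n))"
      unfolding F_def using fn(2) lt by (auto simp: mod_Suc)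
    then show ?thesis using fn(3) lt F_def by simp
  qed
  have FT: "F i \<in> ?T" "above (F i) (F (Suc i))" for i using FR[of i] unfolding RT_def by auto
  have Fper: "F (i + n) = F i" for i unfolding F_def by simp
  define sg where "sg P = (SOME s. s \<in> S \<and> P \<in> components (s - C))" for P
  have sgP: "sg P \<in> S \<and> P \<in> components (sg P - C)" if "P \<in> ?T" for P
    unfolding sg_def by (rule someI_ex) (use piece_seg that in blast)
  define \<sigma> where "\<sigma> i = sg (F i)" for i
  have sig: "\<sigma> i \<in> S" "F i \<in> components (\<sigma> i - C)" "F i \<subseteq> \<sigma> i" for i
    using sgP[OF FT(1)[of i]] in_components_subset unfolding \<sigma>_def by blast+
  have ab: "\<sigma> i \<noteq> \<sigma> (Suc i)" "above (\<sigma> i) (\<sigma> (Suc i))"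
    "\<exists>x. x \<in> proj ` \<sigma> i \<and> x \<in> proj ` \<sigma> (Suc i) \<and> lift (\<sigma> i) x \<in> F i \<and> lift (\<sigma> (Suc i)) x \<in> F (Suc i)"
    for i using above_pieces[OF sig(1)[of i] sig(1)[of "Suc i"] sig(3)[of i] sig(3)[of "Suc i"] FT(2)[of i]]
    by blast+
  define xx where "xx i = (SOME x. x \<in> proj ` \<sigma> i \<and> x \<in> proj ` \<sigma> (Suc i) \<and> lift (\<sigma> i) x \<in> F i
     \<and> lift (\<sigma> (Suc i)) x \<in> F (Suc i))" for i
  have xx: "xx i \<in> proj ` \<sigma> i" "xx i \<in> proj ` \<sigma> (Suc i)" "lift (\<sigma> i) (xx i) \<in> F i"
     "lift (\<sigma> (Suc i)) (xx i) \<in> F (Suc i)" for i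
    unfolding xx_def using someI_ex[OF ab(3)[of i]] by blast+
  have xxI: "xx i \<in> Ipts S (\<sigma> i)" "xx i \<in> Ipts S (\<sigma> (Suc i))" for i
    using Ipts_intro[OF sig(1) ab(1) xx(1,2)] Ipts_intro[OF sig(1) ab(1)[symmetric] xx(2,1)] by auto
  have sper: "\<sigma> (i + n) = \<sigma> i" for i unfolding \<sigma>_def using Fper by simp
  have xper: "xx (i + n) = xx i" for i
  proof -
    have "F (Suc (i + n)) = F (Suc i)" using Fper[of "Suc i"] by simp
    moreover have "\<sigma> (Suc (i + n)) = \<sigma> (Suc i)" using sper[of "Suc i"] by simp
    ultimately show ?thesis unfolding xx_def using Fper sper by simp
  qed
  have arc: "((\<sigma> i, xx i), (\<sigma> (Suc i), xx i)) \<in> ?A'" for i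
  proof -
    have "((\<sigma> i, xx i), (\<sigma> (Suc i), xx i)) \<in> GS_A S"
      using A_intro[OF sig(1) sig(1) ab(1,2) xx(1,2)] .
    moreover have "(\<sigma> i, xx i) \<notin> U" using pp_vertex(2)[OF sig(1,2) hU xxI(1) xx(3)] .
    moreover have "(\<sigma> (Suc i), xx i) \<notin> U" using pp_vertex(2)[OF sig(1,2) hU xxI(2) xx(4)] .
    ultimately show ?thesis by simp
  qed
  let ?Q = "\<lambda>i ys. ys \<noteq> [] \<and> hd ys = (\<sigma> i, xx (i - 1)) \<and> last ys = (\<sigma> i, xx i) \<and> distinct ys \<and>
      successively (\<lambda>u w. {u, w} \<in> GS_E S \<and> {u, w} \<inter> U = {}) ys \<and>
      (\<forall>v\<in>set ys. v \<in> GS_V S \<and> v \<notin> U \<and> fst v = \<sigma> i \<and> lift (\<sigma> i) (snd v) \<in> F i)"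
  define ps where "ps i = (SOME ys. ?Q i ys)" for i
  have psQ: "?Q i (ps i)" if "1 \<le> i" for i
  proof -
    have "Suc (i - 1) = i" using that by simp
    then have a: "xx (i - 1) \<in> Ipts S (\<sigma> i)" "lift (\<sigma> i) (xx (i - 1)) \<in> F i"
      using xxI(2)[of "i - 1"] xx(4)[of "i - 1"] by auto
    show ?thesis unfolding ps_def
      by (rule someI_ex) (rule path_in_piece[OF sig(1,2) hU a xxI(1) xx(3)])
  qed
  have n3: "n \<ge> 3"
  proof (rule ccontr)
    assume "\<not> n \<ge> 3" then have "n = 1 \<or> n = 2" using fn(1) by auto
    then show False
    proof
      assume n1: "n = 1"
      then have "F 1 = F 0" unfolding F_def by simp
      then show False using no_above_same[OF sig(1)[of 0] sig(3)[of 0], of "F 1"] FT(2)[of 0] sig(3)[of 0]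
        by simp
    next
      assume n2: "n = 2"
      then have "F 2 = F 0" unfolding F_def by simp
      have "above (F 0) (F 1)" using FT(2)[of 0] by simp
      moreover have "above (F 1) (F 0)" using FT(2)[of 1] \<open>F 2 = F 0\<close> by (simp add: numeral_2_eq_2)
      ultimately show False using no2cycle[OF sig(1)[of 0] sig(1)[of 1] sig(3)[of 0] sig(3)[of 1]] by blast
    qed
  qed
  have modi: "i mod n = (if i = n then 0 else i)" if "1 \<le> i" "i \<le> n" for i
    using that by auto
  have psdisj: "i = j" if ij: "1 \<le> i" "i \<le> n" "1 \<le> j" "j \<le> n" and v: "v \<in> set (ps i)" "v \<in> set (ps j)" for i j v
  proof -
    have qi: "fst v = \<sigma> i" "lift (\<sigma> i) (snd v) \<in> F i" using psQ[OF ij(1)] v(1) by auto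
    have qj: "fst v = \<sigma> j" "lift (\<sigma> j) (snd v) \<in> F j" using psQ[OF ij(3)] v(2) by auto
    have "F i = F j" using pieces_eq(2)[OF sig(1)[of i] sig(1)[of j] sig(2)[of i] sig(2)[of j] qi(2)] qi qj by simp
    then have "f (i mod n) = f (j mod n)" unfolding F_def .
    moreover have "i mod n \<in> {..<n}" "j mod n \<in> {..<n}" using fn(1) by auto
    ultimately have "i mod n = j mod n" using fn(4) by (meson inj_onD)
    then show "i = j" using modi[OF ij(1,2)] modi[OF ij(3,4)] ij by (auto split: if_splits)
  qed
  define step where "step u w = ((u, w) \<in> ?A' \<or> {u, w} \<in> ?E')" for u w
  define xs where "xs = concat (map ps [1..<n+1])"
  have sc: "successively step xs \<and> (1 < n + 1 \<longrightarrow> last xs = last (ps (n + 1 - 1)) \<and> hd xs = hd (ps 1))"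
    unfolding xs_def
  proof (rule succ_concat)
    fix i assume i: "1 \<le> i" "i < n + 1"
    have "successively (\<lambda>u w. {u, w} \<in> GS_E S \<and> {u, w} \<inter> U = {}) (ps i)" using psQ[OF i(1)] by blast
    then have "successively step (ps i)" by (rule successively_mono) (auto simp: step_def)
    then show "ps i \<noteq> [] \<and> successively step (ps i)" using psQ[OF i(1)] by blast
  next
    fix i assume i: "1 \<le> i" "Suc i < n + 1"
    have "last (ps i) = (\<sigma> i, xx i)" "hd (ps (Suc i)) = (\<sigma> (Suc i), xx i)"
      using psQ[OF i(1)] psQ[of "Suc i"] by auto
    then show "step (last (ps i)) (hd (ps (Suc i)))" using arc[of i] step_def by simp
  qed
  have lastxs: "last xs = (\<sigma> 0, xx 0)"
    using sc psQ[of n] fn(1) sper[of 0] xper[of 0] by auto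
  have hdxs: "hd xs = (\<sigma> 1, xx 0)" using sc psQ[of 1] fn(1) by auto
  have succ: "successively step (xs @ [hd xs])"
    using sc lastxs hdxs arc[of 0] step_def by (auto simp: successively_append_iff)
  have nonempty: "ps i \<noteq> []" if "i \<in> set [1..<n+1]" for i using psQ that by auto
  have dist: "distinct xs"
    unfolding xs_def distinct_concat_iff
  proof (intro conjI allI impI ballI)
    have "[] \<notin> set (map ps [1..<n+1])" using nonempty by (metis imageE list.set_map)
    then have "removeAll [] (map ps [1..<n+1]) = map ps [1..<n+1]" by (simp add: removeAll_id)
    moreover have "distinct (map ps [1..<n+1])"
    proof (subst distinct_map, intro conjI)
      show "inj_on ps (set [1..<n+1])"
      proof (rule inj_onI)
        fix i j assume h: "i \<in> set [1..<n+1]" "j \<in> set [1..<n+1]" "ps i = ps j"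
        then obtain v where "v \<in> set (ps i)" using nonempty by (meson list.set_sel(1))
        then show "i = j" using psdisj[of i j v] h by auto
      qed
    qed simp
    ultimately show "distinct (removeAll [] (map ps [1..<n+1]))" by simp
  next
    fix ys assume "ys \<in> set (map ps [1..<n+1])"
    then show "distinct ys" using psQ by auto
  next
    fix ys zs assume h: "ys \<in> set (map ps [1..<n+1]) \<and> zs \<in> set (map ps [1..<n+1]) \<and> ys \<noteq> zs"
    then obtain i j where ij: "i \<in> set [1..<n+1]" "j \<in> set [1..<n+1]" "ys = ps i" "zs = ps j" by auto
    show "set ys \<inter> set zs = {}"
    proof (rule ccontr)
      assume "set ys \<inter> set zs \<noteq> {}"
      then obtain v where "v \<in> set (ps i)" "v \<in> set (ps j)" using ij by auto
      then have "i = j" using psdisj[of i j v] ij by auto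
      then show False using h ij by simp
    qed
  qed
  have len: "length xs \<ge> 3"
    using length_concat_ge[of "[1..<n+1]" ps] nonempty n3 unfolding xs_def by fastforce
  have sub: "set xs \<subseteq> ?V'"
  proof
    fix v assume "v \<in> set xs"
    then obtain i where "i \<in> set [1..<n+1]" "v \<in> set (ps i)" unfolding xs_def by auto
    then show "v \<in> ?V'" using psQ[of i] by auto
  qed
  have "has_mixed_cycle ?V' ?E' ?A'"
    using cycle_of_list[OF dist len sub] succ unfolding step_def .
  then show False using nomc by simp
qed


definition hit :: "point3 set set \<Rightarrow> point3 set \<Rightarrow> (point3 set \<times> point2) \<Rightarrow> point3 \<Rightarrow> point2 \<Rightarrow> bool" where
  "hit S0 C v c y \<longleftrightarrow> {v, (fst v, y)} \<in> GS_E S0 \<and> tau (fst v) (snd v) < tau (fst v) y \<and> c \<in> C \<and> c \<in> fst v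
     \<and> tau (fst v) (snd v) < tau (fst v) (proj c) \<and> tau (fst v) (proj c) < tau (fst v) y"

lemma hit_gap: assumes "hit S C (s, x) c y" "z \<in> Ipts S s" "tau s x < tau s z" "tau s z < tau s y"
  shows False
proof -
  have e: "{(s, x), (s, y)} \<in> GS_E S" using assms(1) unfolding hit_def by simp
  have es: "s \<in> S" "x \<in> Ipts S s" "y \<in> Ipts S s" "\<forall>z\<in>Ipts S s. z \<notin> open_segment x y"
    using E_struct[OF e] by auto
  have nv: "nonvertical_segment s" using nvS es by blast
  have "z \<in> open_segment x y"
    using open_seg_L[OF nv Ipts_L[OF es(2)] Ipts_L[OF es(3)] Ipts_L[OF assms(2)]] assms(3,4) by simp
  then show False using es(4) assms(2) by blast
qed

lemma lift_tau: "tau s x = tau s y \<Longrightarrow> lift s x = lift s y" unfolding lift_def by simp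

lemma cuts_card:
  assumes finC: "finite C"
  defines "U \<equiv> {v \<in> GS_V S. lift (fst v) (snd v) \<in> C} \<union> {v \<in> GS_V S. \<exists>c y. hit S C v c y}"
  shows "card U \<le> card C"
proof -
  let ?U1 = "{v \<in> GS_V S. lift (fst v) (snd v) \<in> C}"
  define h where "h v = (if v \<in> ?U1 then lift (fst v) (snd v) else (SOME c. \<exists>y. hit S C v c y))" for v
  have hp: "h v \<in> C \<and> h v \<in> fst v \<and> (v \<in> ?U1 \<longrightarrow> h v = lift (fst v) (snd v))
      \<and> (v \<notin> ?U1 \<longrightarrow> (\<exists>y. hit S C v (h v) y))" if "v \<in> U" for v
  proof (cases "v \<in> ?U1")
    case True
    then have "fst v \<in> S" "snd v \<in> proj ` fst v" unfolding GS_V_def using Ipts_L by auto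
    then have "lift (fst v) (snd v) \<in> fst v" using proj_lift(2) nvS by blast
    then show ?thesis using True h_def by simp
  next
    case False
    then have "\<exists>c y. hit S C v c y" using that U_def by blast
    moreover have "h v = (SOME c. \<exists>y. hit S C v c y)" unfolding h_def by (rule if_not_P[OF False])
    ultimately have "\<exists>y. hit S C v (h v) y" using someI_ex[of "\<lambda>c. \<exists>y. hit S C v c y"] by simp
    then show ?thesis using False unfolding hit_def by blast
  qed
  have inj: "inj_on h U"
  proof (rule inj_onI)
    fix v1 v2 assume v: "v1 \<in> U" "v2 \<in> U" "h v1 = h v2"
    obtain s1 x1 where v1: "v1 = (s1, x1)" by (cases v1)
    obtain s2 x2 where v2: "v2 = (s2, x2)" by (cases v2)
    have inV: "s1 \<in> S" "x1 \<in> Ipts S s1" "s2 \<in> S" "x2 \<in> Ipts S s2"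
      using v(1,2) v1 v2 unfolding U_def GS_V_def by auto
    have "h v1 \<in> s1" "h v2 \<in> s2" using hp[OF v(1)] hp[OF v(2)] v1 v2 by auto
    then have "s1 = s2" using disj_pt[OF inV(1) inV(3)] v(3) by simp
    then have v2': "v2 = (s1, x2)" using v2 by simp
    let ?s = s1
    have nv: "nonvertical_segment ?s" using nvS inV by blast
    have L: "x1 \<in> proj ` ?s" "x2 \<in> proj ` ?s" using inV \<open>s1 = s2\<close> Ipts_L by blast+
    have I2: "x2 \<in> Ipts S ?s" using inV \<open>s1 = s2\<close> by simp
    have taulift: "tau ?s (proj (lift ?s x)) = tau ?s x" if "x \<in> proj ` ?s" for x
      using proj_lift(1)[OF nv that] by simp
    consider "v1 \<in> ?U1" "v2 \<in> ?U1" | "v1 \<in> ?U1" "v2 \<notin> ?U1" | "v1 \<notin> ?U1" "v2 \<in> ?U1"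
      | "v1 \<notin> ?U1" "v2 \<notin> ?U1" by blast
    then show "v1 = v2"
    proof cases
      case 1
      then have "lift ?s x1 = lift ?s x2" using hp[OF v(1)] hp[OF v(2)] v(3) v1 v2' by auto
      then have "x1 = x2" using proj_lift(1)[OF nv L(1)] proj_lift(1)[OF nv L(2)] by metis
      then show ?thesis using v1 v2' by simp
    next
      case 2
      obtain y where y: "hit S C v2 (h v2) y" using hp[OF v(2)] 2 by blast
      have "h v2 = lift ?s x1" using hp[OF v(1)] 2 v(3) v1 by simp
      then have "tau ?s (proj (h v2)) = tau ?s x1" using taulift[OF L(1)] by simp
      then show ?thesis using hit_gap[of C ?s x2 "h v2" y x1] y v2' inV unfolding hit_def by auto
    next
      case 3
      obtain y where y: "hit S C v1 (h v1) y" using hp[OF v(1)] 3 by blast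
      have "h v1 = lift ?s x2" using hp[OF v(2)] 3 v(3) v2' by simp
      then have "tau ?s (proj (h v1)) = tau ?s x2" using taulift[OF L(2)] by simp
      then show ?thesis using hit_gap[of C ?s x1 "h v1" y x2] y v1 I2 unfolding hit_def by auto
    next
      case 4
      obtain y1 where y1: "hit S C v1 (h v1) y1" using hp[OF v(1)] 4 by blast
      obtain y2 where y2: "hit S C v2 (h v2) y2" using hp[OF v(2)] 4 by blast
      have "\<not> tau ?s x1 < tau ?s x2"
        using hit_gap[of C ?s x1 "h v1" y1 x2] y1 y2 v1 v2' v(3) I2 unfolding hit_def by auto
      moreover have "\<not> tau ?s x2 < tau ?s x1"
        using hit_gap[of C ?s x2 "h v2" y2 x1] y1 y2 v1 v2' v(3) inV unfolding hit_def by auto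
      ultimately have "x1 = x2" using tau_inj[OF nv L] by simp
      then show ?thesis using v1 v2' by simp
    qed
  qed
  have "h ` U \<subseteq> C" using hp by blast
  then show ?thesis using card_inj_on_le[OF inj _ finC] by blast
qed


lemma cuts_fvs:
  assumes nodc: "\<not> has_depth_cycle (pieces S C)"
  defines "U \<equiv> {v \<in> GS_V S. lift (fst v) (snd v) \<in> C} \<union> {v \<in> GS_V S. \<exists>c y. hit S C v c y}"
  shows "feedback_vertex_set (GS_V S) (GS_E S) (GS_A S) U"
proof -
  let ?V' = "GS_V S - U" and ?E' = "{e \<in> GS_E S. e \<inter> U = {}}"
    and ?A' = "{a \<in> GS_A S. fst a \<notin> U \<and> snd a \<notin> U}"
  let ?T = "pieces S C"
  define Pc where "Pc w = connected_component_set (fst w - C) (lift (fst w) (snd w))" for w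
  have vert: "lift (fst w) (snd w) \<in> fst w - C" "Pc w \<in> ?T" "lift (fst w) (snd w) \<in> Pc w"
    "fst w \<in> S" "snd w \<in> proj ` fst w" if "w \<in> ?V'" for w
  proof -
    show fs: "fst w \<in> S" "snd w \<in> proj ` fst w" using that unfolding GS_V_def using Ipts_L by auto
    have "lift (fst w) (snd w) \<notin> C" using that unfolding U_def by auto
    then show l: "lift (fst w) (snd w) \<in> fst w - C" using proj_lift(2)[OF nvS[OF fs(1)] fs(2)] by simp
    then show "lift (fst w) (snd w) \<in> Pc w" unfolding Pc_def by simp
    have "Pc w \<in> components (fst w - C)" unfolding Pc_def components_iff using l by blast
    then show "Pc w \<in> ?T" unfolding pieces_def using fs(1) by blast
  qed
  have edgeP: "Pc u = Pc w" if e: "{u, w} \<in> ?E'" for u w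
  proof -
    have e1: "{u, w} \<in> GS_E S" "u \<notin> U" "w \<notin> U" using e by auto
    note es = E_struct[OF e1(1)]
    define s where "s = fst u"
    define x where "x = snd u"
    define y where "y = snd w"
    have uw: "u = (s, x)" "w = (s, y)" using es(1) s_def x_def y_def by (metis prod.collapse)+
    have s: "s \<in> S" using es s_def by simp
    have nv: "nonvertical_segment s" using nvS s by blast
    have L: "x \<in> proj ` s" "y \<in> proj ` s" using es Ipts_L s_def x_def y_def by auto
    have inV: "u \<in> GS_V S" "w \<in> GS_V S" using es uw s unfolding GS_V_def by auto
    let ?p = "lift s x" and ?q = "lift s y"
    have pq: "?p \<in> s" "?q \<in> s" using proj_lift(2)[OF nv] L by auto
    have tp: "tau s (proj ?p) = tau s x" "tau s (proj ?q) = tau s y" using proj_lift(1)[OF nv] L by auto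
    have "closed_segment ?p ?q \<inter> C = {}"
    proof (rule ccontr)
      assume "closed_segment ?p ?q \<inter> C \<noteq> {}"
      then obtain c where c: "c \<in> closed_segment ?p ?q" "c \<in> C" by blast
      have conv: "convex s" using eab[OF nv] by (metis convex_closed_segment)
      have cs: "c \<in> s" using closed_segment_subset[OF pq conv] c by blast
      have btw: "tau s x \<le> tau s (proj c) \<and> tau s (proj c) \<le> tau s y \<or> tau s y \<le> tau s (proj c) \<and> tau s (proj c) \<le> tau s x"
        using closed_seg_s[OF nv pq cs] c tp by simp
      have cl: "c = lift s (proj c)" using lift_proj(1)[OF nv cs] by simp
      have nx: "tau s (proj c) \<noteq> tau s x"
      proof
        assume "tau s (proj c) = tau s x"
        then have "c = ?p" using cl lift_tau by metis
        then have "u \<in> U" using c inV uw unfolding U_def by auto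
        then show False using e1 by simp
      qed
      have ny: "tau s (proj c) \<noteq> tau s y"
      proof
        assume "tau s (proj c) = tau s y"
        then have "c = ?q" using cl lift_tau by metis
        then have "w \<in> U" using c inV uw unfolding U_def by auto
        then show False using e1 by simp
      qed
      show False
      proof (cases "tau s x < tau s y")
        case True
        have "hit S C u c y" unfolding hit_def using e1 uw True btw nx ny c cs by auto
        then have "u \<in> U" using inV unfolding U_def by blast
        then show False using e1 by simp
      next
        case False
        have "{w, (fst w, x)} = {u, w}" using uw by auto
        then have "hit S C w c x" unfolding hit_def using e1 uw False btw nx ny c cs by auto
        then have "w \<in> U" using inV unfolding U_def by blast
        then show False using e1 by simp
      qed
    qed
    then show ?thesis using same_comp[OF s pq] uw unfolding Pc_def by simp
  qed
  have arcP: "above (Pc u) (Pc w)" if a: "(u, w) \<in> ?A'" for u w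
  proof -
    have a1: "(u, w) \<in> GS_A S" "u \<notin> U" "w \<notin> U" using a by auto
    note as = A_struct[OF a1(1)]
    have inV: "u \<in> ?V'" "w \<in> ?V'" using a1 as unfolding GS_V_def
      using Ipts_intro[of "fst w" "fst u" "snd u"] Ipts_intro[of "fst u" "fst w" "snd u"] by auto
    have z: "zc (lift (fst u) (snd u)) > zc (lift (fst w) (snd u))"
      using above_seg_lift[OF as(2,3,4,6,7,5)] .
    have pr: "proj (lift (fst u) (snd u)) = proj (lift (fst w) (snd w))"
      using proj_lift(1)[OF nvS[OF as(2)] as(6)] proj_lift(1)[OF nvS[OF as(3)] as(7)] as(1) by simp
    show ?thesis unfolding above_def using vert(3)[OF inV(1)] vert(3)[OF inV(2)] pr z as(1) by auto
  qed
  have "\<not> has_mixed_cycle ?V' ?E' ?A'"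
  proof
    assume "has_mixed_cycle ?V' ?E' ?A'"
    then obtain v and l :: nat where mcv: "mixed_cycle ?V' ?E' ?A' v l"
      unfolding has_mixed_cycle_def by blast
    then obtain ua where mc: "l \<ge> 3" "v (l - 1) = v 0" "\<forall>i<l. v i \<in> ?V'"
      "\<forall>i j. i < l - 1 \<and> j < l - 1 \<and> i \<noteq> j \<longrightarrow> v i \<noteq> v j"
      "\<forall>i < l - 1. (ua i \<longrightarrow> (v i, v (i + 1)) \<in> ?A') \<and> (\<not> ua i \<longrightarrow> {v i, v (i + 1)} \<in> ?E')"
      "\<forall>i j. i < l - 1 \<and> j < l - 1 \<and> i \<noteq> j \<and> \<not> ua i \<and> \<not> ua j \<longrightarrow>
               {v i, v (i + 1)} \<noteq> {v j, v (j + 1)}"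
      unfolding mixed_cycle_def by (elim conjE exE) (rule that; assumption)
    define n where "n = l - 1"
    have n2: "n \<ge> 2" using mc n_def by simp
    have vn: "v n = v 0" using mc n_def by simp
    have vV: "v i \<in> ?V'" if "i \<le> n" for i using mc(3) that n_def mc(1) by auto
    show False
    proof (cases "\<exists>i<n. ua i")
      case True
      have claim: "(Pc (v 0), Pc (v j)) \<in> (RT ?T)\<^sup>* \<and> ((\<exists>i<j. ua i) \<longrightarrow> (Pc (v 0), Pc (v j)) \<in> (RT ?T)\<^sup>+)"
        if "j \<le> n" for j
        using that
      proof (induction j)
        case 0 then show ?case by simp
      next
        case (Suc j)
        have jn: "j < l - 1" using Suc n_def by simp
        have IH: "(Pc (v 0), Pc (v j)) \<in> (RT ?T)\<^sup>*" "(\<exists>i<j. ua i) \<longrightarrow> (Pc (v 0), Pc (v j)) \<in> (RT ?T)\<^sup>+"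
          using Suc by auto
        show ?case
        proof (cases "ua j")
          case True
          then have "(v j, v (j + 1)) \<in> ?A'" using mc(5) jn by blast
          then have "(Pc (v j), Pc (v (Suc j))) \<in> RT ?T"
            using arcP vert(2)[OF vV[of j]] vert(2)[OF vV[of "Suc j"]] Suc.prems unfolding RT_def by auto
          then have "(Pc (v 0), Pc (v (Suc j))) \<in> (RT ?T)\<^sup>+" using rtrancl_into_trancl1[OF IH(1)] by blast
          then show ?thesis by auto
        next
          case False
          then have "{v j, v (j + 1)} \<in> ?E'" using mc(5) jn by blast
          then have "Pc (v j) = Pc (v (j + 1))" by (rule edgeP)
          then have "Pc (v (Suc j)) = Pc (v j)" by simp
          moreover have "(\<exists>i<Suc j. ua i) \<Longrightarrow> (\<exists>i<j. ua i)" using False less_Suc_eq by auto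
          ultimately show ?thesis using IH by auto
        qed
      qed
      have "(Pc (v 0), Pc (v 0)) \<in> (RT ?T)\<^sup>+" using claim[of n] True vn by auto
      then have "has_depth_cycle ?T" unfolding dc_iff trancl_power by blast
      then show False using nodc by simp
    next
      case False
      then have edges: "{v i, v (i + 1)} \<in> ?E'" if "i < n" for i using mc(5) that n_def by auto
      define s0 where "s0 = fst (v 0)"
      have seg: "fst (v i) = s0" if "i \<le> n" for i
        using that
      proof (induction i)
        case (Suc i)
        then show ?case using E_struct(1)[of "v i" "v (i + 1)"] edges[of i] by auto
      qed (simp add: s0_def)
      have s0: "s0 \<in> S" using vert(4)[OF vV[of 0]] s0_def by simp
      have nv: "nonvertical_segment s0" using nvS s0 by blast
      have L: "snd (v i) \<in> proj ` s0" if "i \<le> n" for i using vert(5)[OF vV[OF that]] seg[OF that] by simp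
      define g where "g i = tau s0 (snd (v i))" for i
      define m where "m = Max (g ` {..<n})"
      have ne: "{..<n} \<noteq> {}" using n2 by (metis lessThan_empty_iff not_numeral_le_zero)
      have "m \<in> g ` {..<n}" unfolding m_def using ne by (intro Max_in) auto
      then obtain j where j: "j < n" "g j = m" by auto
      have jmax: "g i \<le> g j" if "i < n" for i using that j unfolding m_def by simp
      define j' where "j' = (if j = 0 then n - 1 else j - 1)"
      have j': "j' < n" "j' \<noteq> j" "v (Suc j') = v j" using j n2 vn unfolding j'_def by auto
      have e1: "{v j, v (j + 1)} \<in> GS_E S" using edges[OF j(1)] by simp
      have e2: "{v j', v j} \<in> GS_E S" using edges[OF j'(1)] j'(3) by simp
      have gs: "g (Suc j) \<le> g j"
      proof (cases "Suc j < n")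
        case True then show ?thesis using jmax by simp
      next
        case False then have "Suc j = n" using j by simp
        then show ?thesis using jmax[of 0] vn n2 g_def by simp
      qed
      have "snd (v (Suc j)) \<noteq> snd (v j)" using E_struct(5)[OF e1] by simp
      then have g1: "g (Suc j) < g j"
        using gs tau_inj[OF nv L[of "Suc j"] L[of j]] j g_def by fastforce
      have "snd (v j') \<noteq> snd (v j)" using E_struct(5)[OF e2] by simp
      then have g2: "g j' < g j"
        using jmax[OF j'(1)] tau_inj[OF nv L[of j'] L[of j]] j j' g_def by fastforce
      have pj: "v j = (s0, snd (v j))" "v (Suc j) = (s0, snd (v (Suc j)))" "v j' = (s0, snd (v j'))"
        using seg j j' by (metis Suc_leI less_imp_le_nat prod.collapse)+
      have "{(s0, snd (v j)), (s0, snd (v (Suc j)))} \<in> GS_E S" using e1 pj by simp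
      moreover have "{(s0, snd (v j)), (s0, snd (v j'))} \<in> GS_E S" using e2 pj by (simp add: insert_commute)
      ultimately have "snd (v (Suc j)) = snd (v j')"
        using lower_unique g1 g2 unfolding g_def by blast
      then have "v (Suc j) = v j'" using pj by simp
      then have "{v j, v (j + 1)} = {v j', v (j' + 1)}" using j'(3) by auto
      moreover have "\<not> ua j" "\<not> ua j'" using False j j' by auto
      moreover have "j < l - 1" "j' < l - 1" "j \<noteq> j'" using j j' n_def by auto
      ultimately show False using mc(6) by blast
    qed
  qed
  moreover have "U \<subseteq> GS_V S" unfolding U_def by auto
  ultimately show ?thesis unfolding feedback_vertex_set_def delete_vertices_def by simp
qed

end


theorem lemma1:
  fixes S :: "point3 set set" and k :: nat
  assumes "finite S"
    and "\<forall>s\<in>S. nonvertical_segment s"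
    and "general_position S"
  shows "(\<exists>C. finite C \<and> C \<subseteq> \<Union>S \<and> card C \<le> k \<and> \<not> has_depth_cycle (pieces S C))
         \<longleftrightarrow> (\<exists>U. feedback_vertex_set (GS_V S) (GS_E S) (GS_A S) U \<and> card U \<le> k)"
proof -
  interpret SG S using assms by unfold_locales
  show ?thesis
  proof
    assume "\<exists>C. finite C \<and> C \<subseteq> \<Union>S \<and> card C \<le> k \<and> \<not> has_depth_cycle (pieces S C)"
    then obtain C where C: "finite C" "card C \<le> k" "\<not> has_depth_cycle (pieces S C)" by blast
    let ?U = "{v \<in> GS_V S. lift (fst v) (snd v) \<in> C} \<union> {v \<in> GS_V S. \<exists>c y. hit S C v c y}"
    have "feedback_vertex_set (GS_V S) (GS_E S) (GS_A S) ?U" using cuts_fvs[OF C(3)] by simp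
    moreover have "card ?U \<le> k" using cuts_card[OF C(1)] C(2) by simp
    ultimately show "\<exists>U. feedback_vertex_set (GS_V S) (GS_E S) (GS_A S) U \<and> card U \<le> k" by blast
  next
    assume "\<exists>U. feedback_vertex_set (GS_V S) (GS_E S) (GS_A S) U \<and> card U \<le> k"
    then obtain U where U: "feedback_vertex_set (GS_V S) (GS_E S) (GS_A S) U" "card U \<le> k" by blast
    let ?C = "(\<lambda>v. lift (fst v) (snd v)) ` U"
    have UV: "U \<subseteq> GS_V S" using U(1) unfolding feedback_vertex_set_def by simp
    then have finU: "finite U" using finite_V finite_subset by blast
    have "finite ?C" using finU by simp
    moreover have "?C \<subseteq> \<Union>S"
    proof
      fix c assume "c \<in> ?C"
      then obtain v where v: "v \<in> U" "c = lift (fst v) (snd v)" by blast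
      then have "fst v \<in> S" "snd v \<in> proj ` fst v" using UV Ipts_L unfolding GS_V_def by auto
      then show "c \<in> \<Union>S" using proj_lift(2)[OF nvS] v by blast
    qed
    moreover have "card ?C \<le> k" using card_image_le[OF finU] U(2) le_trans by blast
    moreover have "\<not> has_depth_cycle (pieces S ?C)" using fvs_to_cuts[OF U(1)] by simp
    ultimately show "\<exists>C. finite C \<and> C \<subseteq> \<Union>S \<and> card C \<le> k \<and> \<not> has_depth_cycle (pieces S C)"
      by blast
  qed
qed

end
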